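(* Fix a constant $0<\alpha<1$. For integers $1\le D\le \alpha n$, the number of pairwise non-isomorphic graphs in the class $\mathcal{L}(n,D)$ of lollipops is at least $$\frac{\big((\lceil n(1-\alpha)\rceil-1)!\big)^{\lceil n(1-\alpha)\rceil}}{\lceil n(1-\alpha)\rceil!}.$$
   Context: Port-labeled graphs: finite simple undirected connected graphs without node labels, where at each node of degree $d$ the incident edges carry distinct port numbers $0,\dots,d-1$; isomorphism is a bijection of nodes preserving edges and port numbers at both endpoints. A lollipop in $\mathcal{L}(n,D)$ has $n$ nodes partitioned into the candy $\{w_1,\dots,w_{n-D}\}$ and the stick $\{s_1,\dots,s_D\}$. The candy nodes form a clique whose edges receive port numbers from $\{0,\dots,n-D-2\}$ at each candy node in an arbitrary way (each candy node using each of these ports exactly once). The stick is the path $s_1,\dots,s_D$ where edge $\{s_j,s_{j+1}\}$ has port $0$ at $s_j$ and port $1$ at $s_{j+1}$; write $u=s_1$ and $v=s_D$ ($u=v$ if $D=1$). Node $v$ is joined to every candy node $w_i$; at each $w_i$ this edge has port $n-D-1$; at $v$ it has port $0$ if $i=1$, and for $i>1$ port $i$ if $u\ne v$ and port $i-1$ if $u=v$. The class $\mathcal{L}(n,D)$ consists of all lollipops obtained by all choices of the port numbering inside the candy. *)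

theory Defs
  imports Complex_Main
begin

text \<open>A port-labeled graph on the node set {0..<n} is represented by a pair (E, p):
  E x y holds iff {x,y} is an edge, and p x y is the port number at node x of the
  edge {x,y}.  (Values outside edges / outside the node set are irrelevant.)\<close>

type_synonym pgraph = "(nat \<Rightarrow> nat \<Rightarrow> bool) \<times> (nat \<Rightarrow> nat \<Rightarrow> nat)"

definition port_iso :: "nat \<Rightarrow> pgraph \<Rightarrow> pgraph \<Rightarrow> bool" where
  "port_iso n G H \<longleftrightarrow> (\<exists>f. bij_betw f {0..<n} {0..<n} \<and>
     (\<forall>x<n. \<forall>y<n. (fst G x y \<longleftrightarrow> fst H (f x) (f y)) \<and>
        (fst G x y \<longrightarrow> snd G x y = snd H (f x) (f y))))"

text \<open>Lollipop layout with k = n - D candy nodes: candy node w_(i+1) is node i (i < k);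
  stick node s_(t+1) is node k + t (t < D); so u = k and v = n - 1.\<close>
definition lol_edge :: "nat \<Rightarrow> nat \<Rightarrow> nat \<Rightarrow> nat \<Rightarrow> bool" where
  "lol_edge n D x y \<longleftrightarrow>
     (let k = n - D in
       (x < k \<and> y < k \<and> x \<noteq> y)
     \<or> (k \<le> x \<and> x < n \<and> k \<le> y \<and> y < n \<and> (y = x + 1 \<or> x = y + 1))
     \<or> (x = n - 1 \<and> y < k) \<or> (y = n - 1 \<and> x < k))"

definition lol_port :: "nat \<Rightarrow> nat \<Rightarrow> (nat \<Rightarrow> nat \<Rightarrow> nat) \<Rightarrow> nat \<Rightarrow> nat \<Rightarrow> nat" where
  "lol_port n D P x y =
     (let k = n - D in
      if \<not> lol_edge n D x y then 0
      else if x < k \<and> y < k then P x y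
      else if x < k then k - 1
      else if x = n - 1 \<and> y < k then
        (if y = 0 then 0 else if D \<noteq> 1 then y + 1 else y)
      else if y = x + 1 then 0 else 1)"

definition valid_candy_ports :: "nat \<Rightarrow> (nat \<Rightarrow> nat \<Rightarrow> nat) \<Rightarrow> bool" where
  "valid_candy_ports k P \<longleftrightarrow> (\<forall>i<k. bij_betw (P i) ({0..<k} - {i}) {0..<k - 1})"

definition lollipops :: "nat \<Rightarrow> nat \<Rightarrow> pgraph set" where
  "lollipops n D = {(lol_edge n D, lol_port n D P) | P. valid_candy_ports (n - D) P}"

end

theory Submission
  imports Defs "HOL-Combinatorics.Permutations"
begin

definition bb :: "nat \<Rightarrow> nat \<Rightarrow> nat \<Rightarrow> nat" where
  "bb k i j = (if i < j then j - i - 1 else j + k - i - 1)"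
definition cc :: "nat \<Rightarrow> nat \<Rightarrow> nat \<Rightarrow> nat" where
  "cc k i p = (if p < k - 1 - i then p + i + 1 else p + i + 1 - k)"

lemma bb_bij: "i < k \<Longrightarrow> bij_betw (bb k i) ({0..<k} - {i}) {0..<k - 1}"
  apply (rule bij_betw_byWitness[where f' = "cc k i"])
  by (auto simp: bb_def cc_def)

lemma cc_props: "i < k \<Longrightarrow> p < k - 1 \<Longrightarrow> cc k i p < k \<and> cc k i p \<noteq> i \<and> bb k i (cc k i p) = p"
  by (auto simp: bb_def cc_def)

definition PP :: "nat \<Rightarrow> (nat \<Rightarrow> nat \<Rightarrow> nat) \<Rightarrow> nat \<Rightarrow> nat \<Rightarrow> nat" where
  "PP k s i j = s i (bb k i j)"

lemma PP_valid:
  assumes "s \<in> (\<Pi>\<^sub>E i\<in>{0..<k}. {p. p permutes {0..<k-1}})"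
  shows "valid_candy_ports k (PP k s)"
  unfolding valid_candy_ports_def
proof (intro allI impI)
  fix i assume i: "i < k"
  have "s i permutes {0..<k-1}" using assms i by auto
  then have "bij_betw (s i) {0..<k-1} {0..<k-1}" by (rule permutes_imp_bij)
  with bb_bij[OF i] have "bij_betw (s i \<circ> bb k i) ({0..<k} - {i}) {0..<k - 1}"
    by (rule bij_betw_trans)
  then show "bij_betw (PP k s i) ({0..<k} - {i}) {0..<k - 1}"
    by (metis (no_types) PP_def comp_apply ext)
qed

lemma lol_port_eqI:
  assumes "1 \<le> D" "\<And>i j. i < n - D \<Longrightarrow> j < n - D \<Longrightarrow> i \<noteq> j \<Longrightarrow> P i j = Q i j"
  shows "lol_port n D P = lol_port n D Q"
  using assms by (auto simp: fun_eq_iff lol_port_def lol_edge_def Let_def)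

lemma PP_inj:
  assumes "s \<in> (\<Pi>\<^sub>E i\<in>{0..<k}. {p. p permutes {0..<k-1}})"
    and "t \<in> (\<Pi>\<^sub>E i\<in>{0..<k}. {p. p permutes {0..<k-1}})"
    and k: "k = n - D"
    and eq: "lol_port n D (PP k s) = lol_port n D (PP k t)"
  shows "s = t"
proof (rule ext)
  fix i show "s i = t i"
  proof (cases "i < k")
    case False then show ?thesis using assms(1,2) by (auto simp: PiE_def extensional_def)
  next
    case i: True
    have ps: "s i permutes {0..<k-1}" and pt: "t i permutes {0..<k-1}" using assms(1,2) i by auto
    show ?thesis
    proof (rule ext)
      fix p show "s i p = t i p"
      proof (cases "p < k - 1")
        case False then show ?thesis using ps pt by (simp add: permutes_not_in)
      next
        case p: True
        define j where "j = cc k i p"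
        have j: "j < k" "j \<noteq> i" "bb k i j = p" using cc_props[OF i p] j_def by auto
        have e: "lol_edge n D i j" using i j k by (auto simp: lol_edge_def Let_def)
        have "lol_port n D (PP k s) i j = lol_port n D (PP k t) i j" using eq by simp
        then show ?thesis using e i j k by (simp add: lol_port_def Let_def PP_def)
      qed
    qed
  qed
qed

lemma port_k1:
  assumes k: "k = n - D" and k3: "3 \<le> k" and D: "1 \<le> D"
    and Q: "valid_candy_ports k Q"
    and e: "lol_edge n D y w" and p: "lol_port n D Q y w = k - 1"
  shows "y = n - 1 \<or> w = n - 1"
proof (rule ccontr)
  assume nv: "\<not> (y = n - 1 \<or> w = n - 1)"
  show False
  proof (cases "y < k \<and> w < k")
    case True
    then have "y \<noteq> w" using e k D by (auto simp: lol_edge_def Let_def)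
    have b: "bij_betw (Q y) ({0..<k} - {y}) {0..<k - 1}" using Q True unfolding valid_candy_ports_def by blast
    have "w \<in> {0..<k} - {y}" using True \<open>y \<noteq> w\<close> by auto
    then have "Q y w \<in> {0..<k-1}" using bij_betwE[OF b] by blast
    then show False using p True e k by (auto simp: lol_port_def Let_def)
  next
    case False
    show False
    proof (cases "y < k")
      case True
      then have "w = n - 1" using False e k by (auto simp: lol_edge_def Let_def)
      then show False using nv by simp
    next
      case yk: False
      have "lol_port n D Q y w = (if w = y + 1 then 0 else 1)"
        using yk nv e k unfolding lol_port_def Let_def by auto
      then show False using p k3 by (simp split: if_splits)
    qed
  qed
qed

lemma v_port:
  assumes k: "k = n - D" and D: "1 \<le> D" "D < n" and y: "y < k" and z: "z < n"
    and e: "lol_edge n D (n - 1) z"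
    and p: "lol_port n D Q (n - 1) z = (if y = 0 then 0 else if D \<noteq> 1 then y + 1 else y)"
  shows "z = y"
  using assms by (auto simp: lol_port_def lol_edge_def Let_def split: if_splits)

lemma iso_eq:
  assumes k: "k = n - D" and k3: "3 \<le> k" and D: "1 \<le> D" "D < n"
    and P: "valid_candy_ports k P" and Q: "valid_candy_ports k Q"
    and iso: "port_iso n (lol_edge n D, lol_port n D P) (lol_edge n D, lol_port n D Q)"
  shows "lol_port n D P = lol_port n D Q"
proof -
  obtain f where bij: "bij_betw f {0..<n} {0..<n}" and
    fp: "\<And>x y. x < n \<Longrightarrow> y < n \<Longrightarrow> (lol_edge n D x y \<longleftrightarrow> lol_edge n D (f x) (f y)) \<and>
        (lol_edge n D x y \<longrightarrow> lol_port n D P x y = lol_port n D Q (f x) (f y))"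
    using iso unfolding port_iso_def by auto
  have fin: "\<And>x. x < n \<Longrightarrow> f x < n" using bij by (auto dest: bij_betwE)
  have finj: "\<And>x y. x < n \<Longrightarrow> y < n \<Longrightarrow> f x = f y \<Longrightarrow> x = y"
    using bij unfolding bij_betw_def inj_on_def by auto
  define v where "v = n - 1"
  have vn: "v < n" "k \<le> v" using v_def D k by auto
  have c: "\<And>y. y < k \<Longrightarrow> lol_edge n D y v \<and> lol_port n D P y v = k - 1"
    using vn k D v_def by (auto simp: lol_edge_def lol_port_def Let_def)
  have h: "\<And>y. y < k \<Longrightarrow> f y = v \<or> f v = v"
  proof -
    fix y assume y: "y < k"
    have yn: "y < n" using y k by auto
    have "lol_edge n D (f y) (f v)" "lol_port n D Q (f y) (f v) = k - 1"
      using fp[OF yn vn(1)] c[OF y] by auto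
    then show "f y = v \<or> f v = v" using port_k1[OF k k3 D(1) Q] v_def by blast
  qed
  have fv: "f v = v"
  proof (rule ccontr)
    assume "f v \<noteq> v"
    then have "f 0 = v" "f 1 = v" using h k3 by auto
    moreover have "1 < n" using k k3 by linarith
    ultimately show False using finj[of 0 1] by auto
  qed
  have fc: "\<And>y. y < k \<Longrightarrow> f y = y"
  proof -
    fix y assume y: "y < k"
    have yn: "y < n" using y k by auto
    have e: "lol_edge n D v y" using y vn k v_def by (auto simp: lol_edge_def Let_def)
    have "lol_port n D P v y = (if y = 0 then 0 else if D \<noteq> 1 then y + 1 else y)"
      using e y vn k v_def by (auto simp: lol_port_def Let_def)
    then have "lol_edge n D v (f y)" "lol_port n D Q v (f y) = (if y = 0 then 0 else if D \<noteq> 1 then y + 1 else y)"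
      using fp[OF vn(1) yn] e fv by auto
    then show "f y = y" using v_port[OF k D y fin[OF yn]] v_def by auto
  qed
  show ?thesis
  proof (rule lol_port_eqI[OF D(1)])
    fix i j assume ij: "i < n - D" "j < n - D" "i \<noteq> j"
    have e: "lol_edge n D i j" using ij by (auto simp: lol_edge_def Let_def)
    have "lol_port n D P i j = lol_port n D Q i j"
      using fp[of i j] e ij fc k by auto
    then show "P i j = Q i j" using e ij by (auto simp: lol_port_def Let_def)
  qed
qed


theorem corollary5p3:
  fixes \<alpha> :: real and n D :: nat
  assumes "0 < \<alpha>" and "\<alpha> < 1"
    and "1 \<le> D" and "real D \<le> \<alpha> * real n"
  shows "\<exists>S \<subseteq> lollipops n D. finite S \<and>
           (\<forall>G\<in>S. \<forall>H\<in>S. G \<noteq> H \<longrightarrow> \<not> port_iso n G H) \<and>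
           real (card S) \<ge>
             (let m = nat \<lceil>real n * (1 - \<alpha>)\<rceil> in real (fact (m - 1) ^ m) / real (fact m))"
proof -
  have npos: "0 < real n"
  proof (rule ccontr)
    assume "\<not> 0 < real n" then have "real n = 0" by simp
    then show False using assms by simp
  qed
  have "\<alpha> * real n < real n" using assms npos by simp
  then have Dn: "D < n" using assms(4) by linarith
  define k where "k = n - D"
  define m where "m = nat \<lceil>real n * (1 - \<alpha>)\<rceil>"
  have rk: "real k = real n - real D" using Dn k_def by simp
  have rl: "real n * (1 - \<alpha>) \<le> real k" using rk assms(4) by (simp add: algebra_simps)
  have "\<lceil>real n * (1 - \<alpha>)\<rceil> \<le> int k" by (rule ceiling_le) (use rl in simp)
  then have mk: "m \<le> k" unfolding m_def by (metis nat_int nat_mono)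
  define T where "T = (\<Pi>\<^sub>E i\<in>{0..<k}. {p. p permutes {0..<k-1}})"
  define F where "F = (\<lambda>s. (lol_edge n D, lol_port n D (PP k s)))"
  define S where "S = F ` T"
  have finT: "finite T" unfolding T_def
    by (intro finite_PiE) (auto intro: finite_permutations)
  have cardT: "card T = fact (k - 1) ^ k"
    unfolding T_def by (simp add: card_PiE card_permutations)
  have injF: "inj_on F T"
    unfolding inj_on_def F_def using PP_inj[OF _ _ k_def] by (auto simp: T_def)
  have cardS: "card S = fact (k - 1) ^ k" unfolding S_def using card_image[OF injF] cardT by simp
  have sub: "S \<subseteq> lollipops n D"
    unfolding S_def F_def lollipops_def using PP_valid k_def by (auto simp: T_def)
  have finS: "finite S" unfolding S_def using finT by simp
  have pw: "\<forall>G\<in>S. \<forall>H\<in>S. G \<noteq> H \<longrightarrow> \<not> port_iso n G H"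
  proof (intro ballI impI)
    fix G H assume G: "G \<in> S" and H: "H \<in> S" and ne: "G \<noteq> H"
    show "\<not> port_iso n G H"
    proof (cases "3 \<le> k")
      case True
      obtain s where s: "s \<in> T" "G = F s" using G S_def by auto
      obtain t where t: "t \<in> T" "H = F t" using H S_def by auto
      show ?thesis
      proof
        assume "port_iso n G H"
        then have "lol_port n D (PP k s) = lol_port n D (PP k t)"
          using iso_eq[OF k_def True assms(3) Dn PP_valid PP_valid] s t T_def F_def by auto
        then show False using s t ne F_def by simp
      qed
    next
      case False
      then have "k - 1 = 0 \<or> k - 1 = 1" by linarith
      then have "fact (k - 1) = (1::nat)" by auto
      then have "card S = 1" using cardS by simp
      then obtain a where "S = {a}" by (auto simp: card_Suc_eq)
      then show ?thesis using G H ne by simp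
    qed
  qed
  have f1: "(1::nat) \<le> fact (k - 1)" by (simp add: fact_ge_1)
  have "fact (m - 1) ^ m \<le> (fact (k - 1) :: nat) ^ m"
    by (intro power_mono fact_mono) (use mk in auto)
  also have "\<dots> \<le> fact (k - 1) ^ k" by (rule power_increasing[OF mk f1])
  finally have le: "real (fact (m - 1) ^ m) \<le> real (card S)" unfolding cardS of_nat_le_iff .
  have "real (fact (m - 1) ^ m) / real (fact m) \<le> real (fact (m - 1) ^ m)"
  proof -
    have "1 \<le> real (fact m)" by (metis fact_ge_1 of_nat_fact)
    then show ?thesis by (simp add: divide_le_eq)
  qed
  with le have "real (card S) \<ge> real (fact (m - 1) ^ m) / real (fact m)" by linarith
  then show ?thesis using sub finS pw unfolding m_def Let_def by blast
qed

end
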